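(* The rational functions $A_G(t/|G|)$ and $B_G(t/|G|)$ are family invariants of the finite group $G$; that is, if $G$ and $H$ are isoclinic finite groups, then $A_G(t/|G|)=A_H(t/|H|)$ and $B_G(t/|G|)=B_H(t/|H|)$.
   Context: For a finite group $G$ and $n\ge 0$, $G$ acts on $G^n$ by simultaneous conjugation. Let $G^{(n)}\subseteq G^n$ be the set of $n$-tuples of pairwise commuting elements. Let $\alpha_{G,n}$ (resp. $\beta_{G,n}$) be the number of $G$-orbits on $G^n$ (resp. on $G^{(n)}$), and set $A_G(t)=\sum_{n\ge0}\alpha_{G,n}t^n$, $B_G(t)=\sum_{n\ge0}\beta_{G,n}t^n$ (rational functions of $t$). Two finite groups $G$ and $H$ are isoclinic if there exist isomorphisms $\theta:G/Z(G)\to H/Z(H)$ and $\phi:G'\to H'$ (commutator subgroups) such that $\phi([g_1,g_2])=[h_1,h_2]$ whenever $\theta(g_iZ(G))=h_iZ(H)$, $i=1,2$. A family invariant is a quantity depending on a group that takes the same value on any two isoclinic groups. *)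

theory Defs
  imports "HOL-Algebra.Algebra" "HOL-Computational_Algebra.Formal_Power_Series"
begin

definition grp_center :: "('a, 'b) monoid_scheme \<Rightarrow> 'a set" where
  "grp_center G = {z \<in> carrier G. \<forall>g \<in> carrier G. z \<otimes>\<^bsub>G\<^esub> g = g \<otimes>\<^bsub>G\<^esub> z}"

text \<open>Commutator, same convention as the library's derived subgroup.\<close>
definition commutator :: "('a, 'b) monoid_scheme \<Rightarrow> 'a \<Rightarrow> 'a \<Rightarrow> 'a" where
  "commutator G x y = x \<otimes>\<^bsub>G\<^esub> y \<otimes>\<^bsub>G\<^esub> inv\<^bsub>G\<^esub> x \<otimes>\<^bsub>G\<^esub> inv\<^bsub>G\<^esub> y"

definition isoclinic :: "('a, 'b) monoid_scheme \<Rightarrow> ('c, 'd) monoid_scheme \<Rightarrow> bool" where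
  "isoclinic G H \<longleftrightarrow>
     (\<exists>\<theta> \<phi>.
        \<theta> \<in> iso (G Mod grp_center G) (H Mod grp_center H) \<and>
        \<phi> \<in> iso (G\<lparr>carrier := derived G (carrier G)\<rparr>) (H\<lparr>carrier := derived H (carrier H)\<rparr>) \<and>
        (\<forall>g1 \<in> carrier G. \<forall>g2 \<in> carrier G. \<forall>h1 \<in> carrier H. \<forall>h2 \<in> carrier H.
           \<theta> (grp_center G #>\<^bsub>G\<^esub> g1) = grp_center H #>\<^bsub>H\<^esub> h1 \<and>
           \<theta> (grp_center G #>\<^bsub>G\<^esub> g2) = grp_center H #>\<^bsub>H\<^esub> h2 \<longrightarrow>
           \<phi> (commutator G g1 g2) = commutator H h1 h2))"

definition tuples :: "('a, 'b) monoid_scheme \<Rightarrow> nat \<Rightarrow> (nat \<Rightarrow> 'a) set" where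
  "tuples G n = {0..<n} \<rightarrow>\<^sub>E carrier G"

definition commuting_tuples :: "('a, 'b) monoid_scheme \<Rightarrow> nat \<Rightarrow> (nat \<Rightarrow> 'a) set" where
  "commuting_tuples G n = {x \<in> tuples G n.
      \<forall>i<n. \<forall>j<n. x i \<otimes>\<^bsub>G\<^esub> x j = x j \<otimes>\<^bsub>G\<^esub> x i}"

definition conj_tuple :: "('a, 'b) monoid_scheme \<Rightarrow> nat \<Rightarrow> 'a \<Rightarrow> (nat \<Rightarrow> 'a) \<Rightarrow> (nat \<Rightarrow> 'a)" where
  "conj_tuple G n g x = (\<lambda>i. if i < n then g \<otimes>\<^bsub>G\<^esub> x i \<otimes>\<^bsub>G\<^esub> inv\<^bsub>G\<^esub> g else undefined)"

definition conj_orbits :: "('a, 'b) monoid_scheme \<Rightarrow> nat \<Rightarrow> (nat \<Rightarrow> 'a) set \<Rightarrow> (nat \<Rightarrow> 'a) set set" where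
  "conj_orbits G n S = (\<lambda>t. (\<lambda>a. conj_tuple G n a t) ` carrier G) ` S"



definition alpha :: "('a, 'b) monoid_scheme \<Rightarrow> nat \<Rightarrow> nat" where
  "alpha G n = card (conj_orbits G n (tuples G n))"

definition beta :: "('a, 'b) monoid_scheme \<Rightarrow> nat \<Rightarrow> nat" where
  "beta G n = card (conj_orbits G n (commuting_tuples G n))"

definition A_fps :: "('a, 'b) monoid_scheme \<Rightarrow> rat fps" where
  "A_fps G = Abs_fps (\<lambda>n. of_nat (alpha G n))"

definition B_fps :: "('a, 'b) monoid_scheme \<Rightarrow> rat fps" where
  "B_fps G = Abs_fps (\<lambda>n. of_nat (beta G n))"

definition subst_scaled :: "rat fps \<Rightarrow> nat \<Rightarrow> rat fps" where
  "subst_scaled F m = F oo (fps_const (1 / of_nat m) * fps_X)"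

end

theory Submission
  imports Defs
begin

lemma center_subgroup:
  assumes "group G" shows "subgroup (grp_center G) G"
proof -
  interpret G: group G by fact
  show ?thesis
  proof
    show "grp_center G \<subseteq> carrier G" unfolding grp_center_def by auto
    show "\<one>\<^bsub>G\<^esub> \<in> grp_center G" unfolding grp_center_def by auto
    fix x y assume x: "x \<in> grp_center G" and y: "y \<in> grp_center G"
    show "x \<otimes>\<^bsub>G\<^esub> y \<in> grp_center G"
    proof -
      have xc: "x \<in> carrier G" "\<forall>g\<in>carrier G. x \<otimes>\<^bsub>G\<^esub> g = g \<otimes>\<^bsub>G\<^esub> x" using x unfolding grp_center_def by auto
      have yc: "y \<in> carrier G" "\<forall>g\<in>carrier G. y \<otimes>\<^bsub>G\<^esub> g = g \<otimes>\<^bsub>G\<^esub> y" using y unfolding grp_center_def by auto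
      have "x \<otimes>\<^bsub>G\<^esub> y \<otimes>\<^bsub>G\<^esub> g = g \<otimes>\<^bsub>G\<^esub> (x \<otimes>\<^bsub>G\<^esub> y)" if g: "g \<in> carrier G" for g
      proof -
        have "x \<otimes>\<^bsub>G\<^esub> y \<otimes>\<^bsub>G\<^esub> g = x \<otimes>\<^bsub>G\<^esub> (y \<otimes>\<^bsub>G\<^esub> g)" using xc(1) yc(1) g by (simp add: G.m_assoc)
        also have "\<dots> = x \<otimes>\<^bsub>G\<^esub> (g \<otimes>\<^bsub>G\<^esub> y)" using yc(2) g by metis
        also have "\<dots> = (x \<otimes>\<^bsub>G\<^esub> g) \<otimes>\<^bsub>G\<^esub> y" using xc(1) yc(1) g by (simp add: G.m_assoc)
        also have "\<dots> = (g \<otimes>\<^bsub>G\<^esub> x) \<otimes>\<^bsub>G\<^esub> y" using xc(2) g by metis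
        also have "\<dots> = g \<otimes>\<^bsub>G\<^esub> (x \<otimes>\<^bsub>G\<^esub> y)" using xc(1) yc(1) g by (simp add: G.m_assoc)
        finally show ?thesis .
      qed
      then show ?thesis using xc(1) yc(1) unfolding grp_center_def by auto
    qed
    show "inv\<^bsub>G\<^esub> x \<in> grp_center G"
      using x unfolding grp_center_def
    proof (clarsimp)
      fix g assume xc: "x \<in> carrier G" and c: "\<forall>g\<in>carrier G. x \<otimes>\<^bsub>G\<^esub> g = g \<otimes>\<^bsub>G\<^esub> x" and g: "g \<in> carrier G"
      have "x \<otimes>\<^bsub>G\<^esub> (inv\<^bsub>G\<^esub> x \<otimes>\<^bsub>G\<^esub> g) = x \<otimes>\<^bsub>G\<^esub> (g \<otimes>\<^bsub>G\<^esub> inv\<^bsub>G\<^esub> x)"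
      proof -
        have "x \<otimes>\<^bsub>G\<^esub> (inv\<^bsub>G\<^esub> x \<otimes>\<^bsub>G\<^esub> g) = g" using xc g by (simp add: G.m_assoc[symmetric])
        also have "\<dots> = (g \<otimes>\<^bsub>G\<^esub> x) \<otimes>\<^bsub>G\<^esub> inv\<^bsub>G\<^esub> x" using xc g by (simp add: G.m_assoc)
        also have "\<dots> = (x \<otimes>\<^bsub>G\<^esub> g) \<otimes>\<^bsub>G\<^esub> inv\<^bsub>G\<^esub> x" using c g by metis
        also have "\<dots> = x \<otimes>\<^bsub>G\<^esub> (g \<otimes>\<^bsub>G\<^esub> inv\<^bsub>G\<^esub> x)" using xc g by (simp add: G.m_assoc)
        finally show ?thesis .
      qed
      then show "inv\<^bsub>G\<^esub> x \<otimes>\<^bsub>G\<^esub> g = g \<otimes>\<^bsub>G\<^esub> inv\<^bsub>G\<^esub> x"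
        using xc g by (meson G.inv_closed G.l_cancel G.m_closed)
    qed
  qed
qed

lemma rcoset_elem:
  assumes "group G" "a \<in> grp_center G #>\<^bsub>G\<^esub> g"
  obtains z where "z \<in> grp_center G" "a = z \<otimes>\<^bsub>G\<^esub> g"
  using assms(2) unfolding r_coset_def by auto

lemma commQ_iff:
  assumes "group G" "g \<in> carrier G" "g' \<in> carrier G"
  shows "(\<forall>a\<in>grp_center G #>\<^bsub>G\<^esub> g. \<forall>b\<in>grp_center G #>\<^bsub>G\<^esub> g'. a \<otimes>\<^bsub>G\<^esub> b = b \<otimes>\<^bsub>G\<^esub> a)
     \<longleftrightarrow> g \<otimes>\<^bsub>G\<^esub> g' = g' \<otimes>\<^bsub>G\<^esub> g"
proof
  interpret G: group G by fact
  have S: "subgroup (grp_center G) G" by (rule center_subgroup[OF assms(1)])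
  assume "\<forall>a\<in>grp_center G #>\<^bsub>G\<^esub> g. \<forall>b\<in>grp_center G #>\<^bsub>G\<^esub> g'. a \<otimes>\<^bsub>G\<^esub> b = b \<otimes>\<^bsub>G\<^esub> a"
  then show "g \<otimes>\<^bsub>G\<^esub> g' = g' \<otimes>\<^bsub>G\<^esub> g"
    using G.rcos_self[OF assms(2) S] G.rcos_self[OF assms(3) S] by blast
next
  interpret G: group G by fact
  assume e: "g \<otimes>\<^bsub>G\<^esub> g' = g' \<otimes>\<^bsub>G\<^esub> g"
  show "\<forall>a\<in>grp_center G #>\<^bsub>G\<^esub> g. \<forall>b\<in>grp_center G #>\<^bsub>G\<^esub> g'. a \<otimes>\<^bsub>G\<^esub> b = b \<otimes>\<^bsub>G\<^esub> a"
  proof (intro ballI)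
    fix a b assume a: "a \<in> grp_center G #>\<^bsub>G\<^esub> g" and b: "b \<in> grp_center G #>\<^bsub>G\<^esub> g'"
    obtain z where z: "z \<in> grp_center G" "a = z \<otimes>\<^bsub>G\<^esub> g" using rcoset_elem[OF assms(1) a] by blast
    obtain w where w: "w \<in> grp_center G" "b = w \<otimes>\<^bsub>G\<^esub> g'" using rcoset_elem[OF assms(1) b] by blast
    have zc: "z \<in> carrier G" "\<forall>x\<in>carrier G. z \<otimes>\<^bsub>G\<^esub> x = x \<otimes>\<^bsub>G\<^esub> z" using z(1) unfolding grp_center_def by auto
    have wc: "w \<in> carrier G" "\<forall>x\<in>carrier G. w \<otimes>\<^bsub>G\<^esub> x = x \<otimes>\<^bsub>G\<^esub> w" using w(1) unfolding grp_center_def by auto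
    have "a \<otimes>\<^bsub>G\<^esub> b = z \<otimes>\<^bsub>G\<^esub> w \<otimes>\<^bsub>G\<^esub> (g \<otimes>\<^bsub>G\<^esub> g')"
    proof -
      have "a \<otimes>\<^bsub>G\<^esub> b = z \<otimes>\<^bsub>G\<^esub> (g \<otimes>\<^bsub>G\<^esub> w) \<otimes>\<^bsub>G\<^esub> g'" using zc(1) wc(1) assms(2,3) z(2) w(2) by (simp add: G.m_assoc)
      also have "\<dots> = z \<otimes>\<^bsub>G\<^esub> (w \<otimes>\<^bsub>G\<^esub> g) \<otimes>\<^bsub>G\<^esub> g'" using wc(2) assms(2) by metis
      also have "\<dots> = z \<otimes>\<^bsub>G\<^esub> w \<otimes>\<^bsub>G\<^esub> (g \<otimes>\<^bsub>G\<^esub> g')" using zc(1) wc(1) assms(2,3) by (simp add: G.m_assoc)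
      finally show ?thesis .
    qed
    also have "\<dots> = w \<otimes>\<^bsub>G\<^esub> z \<otimes>\<^bsub>G\<^esub> (g' \<otimes>\<^bsub>G\<^esub> g)"
      using zc(2) wc(1) e by metis
    also have "\<dots> = b \<otimes>\<^bsub>G\<^esub> a"
    proof -
      have "b \<otimes>\<^bsub>G\<^esub> a = w \<otimes>\<^bsub>G\<^esub> (g' \<otimes>\<^bsub>G\<^esub> z) \<otimes>\<^bsub>G\<^esub> g" using zc(1) wc(1) assms(2,3) z(2) w(2) by (simp add: G.m_assoc)
      also have "\<dots> = w \<otimes>\<^bsub>G\<^esub> (z \<otimes>\<^bsub>G\<^esub> g') \<otimes>\<^bsub>G\<^esub> g" using zc(2) assms(3) by metis
      also have "\<dots> = w \<otimes>\<^bsub>G\<^esub> z \<otimes>\<^bsub>G\<^esub> (g' \<otimes>\<^bsub>G\<^esub> g)" using zc(1) wc(1) assms(2,3) by (simp add: G.m_assoc)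
      finally show ?thesis by simp
    qed
    finally show "a \<otimes>\<^bsub>G\<^esub> b = b \<otimes>\<^bsub>G\<^esub> a" .
  qed
qed

lemma comm_one_iff:
  assumes "group G" "g \<in> carrier G" "g' \<in> carrier G"
  shows "commutator G g g' = \<one>\<^bsub>G\<^esub> \<longleftrightarrow> g \<otimes>\<^bsub>G\<^esub> g' = g' \<otimes>\<^bsub>G\<^esub> g"
proof -
  interpret G: group G by fact
  have "commutator G g g' = (g \<otimes>\<^bsub>G\<^esub> g') \<otimes>\<^bsub>G\<^esub> inv\<^bsub>G\<^esub> (g' \<otimes>\<^bsub>G\<^esub> g)"
    unfolding commutator_def using assms(2,3) by (simp add: G.inv_mult_group G.m_assoc)
  moreover have "a \<otimes>\<^bsub>G\<^esub> inv\<^bsub>G\<^esub> b = \<one>\<^bsub>G\<^esub> \<longleftrightarrow> a = b"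
    if a: "a \<in> carrier G" and b: "b \<in> carrier G" for a b
  proof
    assume "a \<otimes>\<^bsub>G\<^esub> inv\<^bsub>G\<^esub> b = \<one>\<^bsub>G\<^esub>"
    then have "a \<otimes>\<^bsub>G\<^esub> inv\<^bsub>G\<^esub> b \<otimes>\<^bsub>G\<^esub> b = b" using b by simp
    then show "a = b" using a b by (simp add: G.m_assoc)
  next
    assume "a = b" then show "a \<otimes>\<^bsub>G\<^esub> inv\<^bsub>G\<^esub> b = \<one>\<^bsub>G\<^esub>" using b by simp
  qed
  ultimately show ?thesis using assms(2,3) by simp
qed

lemma comm_in_derived:
  assumes "group G" "g \<in> carrier G" "g' \<in> carrier G"
  shows "commutator G g g' \<in> derived G (carrier G)"
proof -
  have "commutator G g g' \<in> derived_set G (carrier G)" unfolding commutator_def using assms by blast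
  then show ?thesis unfolding derived_def by (rule generate.incl)
qed

lemma isoclinic_comm_iff:
  assumes G: "group G" and H: "group H"
    and th: "\<theta> \<in> iso (G Mod grp_center G) (H Mod grp_center H)"
    and ph: "\<phi> \<in> iso (G\<lparr>carrier := derived G (carrier G)\<rparr>) (H\<lparr>carrier := derived H (carrier H)\<rparr>)"
    and rel: "\<forall>g1 \<in> carrier G. \<forall>g2 \<in> carrier G. \<forall>h1 \<in> carrier H. \<forall>h2 \<in> carrier H.
           \<theta> (grp_center G #>\<^bsub>G\<^esub> g1) = grp_center H #>\<^bsub>H\<^esub> h1 \<and>
           \<theta> (grp_center G #>\<^bsub>G\<^esub> g2) = grp_center H #>\<^bsub>H\<^esub> h2 \<longrightarrow>
           \<phi> (commutator G g1 g2) = commutator H h1 h2"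
    and g: "g1 \<in> carrier G" "g2 \<in> carrier G" and h: "h1 \<in> carrier H" "h2 \<in> carrier H"
    and e1: "\<theta> (grp_center G #>\<^bsub>G\<^esub> g1) = grp_center H #>\<^bsub>H\<^esub> h1"
    and e2: "\<theta> (grp_center G #>\<^bsub>G\<^esub> g2) = grp_center H #>\<^bsub>H\<^esub> h2"
  shows "g1 \<otimes>\<^bsub>G\<^esub> g2 = g2 \<otimes>\<^bsub>G\<^esub> g1 \<longleftrightarrow> h1 \<otimes>\<^bsub>H\<^esub> h2 = h2 \<otimes>\<^bsub>H\<^esub> h1"
proof -
  interpret G: group G by fact
  interpret H: group H by fact
  have sG: "subgroup (derived G (carrier G)) G" by (rule G.derived_is_subgroup) simp
  have sH: "subgroup (derived H (carrier H)) H" by (rule H.derived_is_subgroup) simp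
  interpret DG: group "G\<lparr>carrier := derived G (carrier G)\<rparr>" using G.subgroup_imp_group[OF sG] .
  interpret DH: group "H\<lparr>carrier := derived H (carrier H)\<rparr>" using H.subgroup_imp_group[OF sH] .
  have hom: "group_hom (G\<lparr>carrier := derived G (carrier G)\<rparr>) (H\<lparr>carrier := derived H (carrier H)\<rparr>) \<phi>"
    using ph unfolding iso_def group_hom_def group_hom_axioms_def
    by (simp add: DG.is_group DH.is_group)
  have one: "\<phi> \<one>\<^bsub>G\<^esub> = \<one>\<^bsub>H\<^esub>" using group_hom.hom_one[OF hom] by simp
  have inj: "inj_on \<phi> (derived G (carrier G))" using ph unfolding iso_def bij_betw_def by simp
  have c: "commutator G g1 g2 \<in> derived G (carrier G)" using comm_in_derived[OF G g] .
  have o: "\<one>\<^bsub>G\<^esub> \<in> derived G (carrier G)" using subgroup.one_closed[OF sG] .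
  have "commutator G g1 g2 = \<one>\<^bsub>G\<^esub> \<longleftrightarrow> commutator H h1 h2 = \<one>\<^bsub>H\<^esub>"
  proof -
    have "commutator G g1 g2 = \<one>\<^bsub>G\<^esub> \<longleftrightarrow> \<phi> (commutator G g1 g2) = \<phi> \<one>\<^bsub>G\<^esub>"
      using inj_on_eq_iff[OF inj c o] by simp
    also have "\<phi> (commutator G g1 g2) = commutator H h1 h2" using rel g h e1 e2 by blast
    finally show ?thesis using one by simp
  qed
  then show ?thesis using comm_one_iff[OF G g] comm_one_iff[OF H h] by simp
qed


definition CS :: "('a, 'b) monoid_scheme \<Rightarrow> nat set \<Rightarrow> (nat \<times> nat) set \<Rightarrow> (nat \<Rightarrow> 'a) set" where
  "CS G I R = {x \<in> I \<rightarrow>\<^sub>E carrier G. \<forall>(i,j)\<in>R. x i \<otimes>\<^bsub>G\<^esub> x j = x j \<otimes>\<^bsub>G\<^esub> x i}"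

definition commQ :: "('a, 'b) monoid_scheme \<Rightarrow> 'a set \<Rightarrow> 'a set \<Rightarrow> bool" where
  "commQ G q q' = (\<forall>a\<in>q. \<forall>b\<in>q'. a \<otimes>\<^bsub>G\<^esub> b = b \<otimes>\<^bsub>G\<^esub> a)"

definition TQ :: "('a, 'b) monoid_scheme \<Rightarrow> nat set \<Rightarrow> (nat \<times> nat) set \<Rightarrow> (nat \<Rightarrow> 'a set) set" where
  "TQ G I R = {q \<in> I \<rightarrow>\<^sub>E rcosets\<^bsub>G\<^esub> (grp_center G). \<forall>(i,j)\<in>R. commQ G (q i) (q j)}"

lemma card_CS:
  assumes G: "group G" and fin: "finite (carrier G)" and I: "finite I" and R: "R \<subseteq> I \<times> I"
  shows "card (CS G I R) = card (TQ G I R) * card (grp_center G) ^ card I"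
proof -
  interpret G: group G by fact
  let ?Z = "grp_center G"
  have S: "subgroup ?Z G" by (rule center_subgroup[OF G])
  have Zc: "?Z \<subseteq> carrier G" using subgroup.subset[OF S] .
  have cosub: "c \<subseteq> carrier G" if "c \<in> rcosets\<^bsub>G\<^esub> ?Z" for c
    using that Zc unfolding RCOSETS_def by (auto dest: G.r_coset_subset_G)
  have eq: "CS G I R = (\<Union>q\<in>TQ G I R. PiE I q)"
  proof
    show "CS G I R \<subseteq> (\<Union>q\<in>TQ G I R. PiE I q)"
    proof
      fix x assume x: "x \<in> CS G I R"
      then have xe: "x \<in> I \<rightarrow>\<^sub>E carrier G" and xr: "\<forall>(i,j)\<in>R. x i \<otimes>\<^bsub>G\<^esub> x j = x j \<otimes>\<^bsub>G\<^esub> x i"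
        unfolding CS_def by auto
      define q where "q = (\<lambda>i\<in>I. ?Z #>\<^bsub>G\<^esub> x i)"
      have "q \<in> TQ G I R"
        unfolding TQ_def
      proof (intro CollectI conjI)
        show "q \<in> I \<rightarrow>\<^sub>E rcosets\<^bsub>G\<^esub> ?Z"
          using xe Zc unfolding q_def by (auto intro: G.rcosetsI)
        show "\<forall>(i,j)\<in>R. commQ G (q i) (q j)"
        proof clarify
          fix i j assume ij: "(i,j) \<in> R"
          then have "i \<in> I" "j \<in> I" using R by auto
          then show "commQ G (q i) (q j)"
            unfolding q_def commQ_def using commQ_iff[OF G, of "x i" "x j"] xe xr ij by auto
        qed
      qed
      moreover have "x \<in> PiE I q"
        using xe unfolding q_def by (auto simp: PiE_def Pi_def intro!: G.rcos_self[OF _ S])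
      ultimately show "x \<in> (\<Union>q\<in>TQ G I R. PiE I q)" by blast
    qed
  next
    show "(\<Union>q\<in>TQ G I R. PiE I q) \<subseteq> CS G I R"
    proof clarify
      fix q x assume q: "q \<in> TQ G I R" and x: "x \<in> PiE I q"
      have qe: "q \<in> I \<rightarrow>\<^sub>E rcosets\<^bsub>G\<^esub> ?Z" and qr: "\<forall>(i,j)\<in>R. commQ G (q i) (q j)"
        using q unfolding TQ_def by auto
      have "x \<in> I \<rightarrow>\<^sub>E carrier G"
        using x qe cosub by (auto simp: PiE_def Pi_def)
      moreover have "\<forall>(i,j)\<in>R. x i \<otimes>\<^bsub>G\<^esub> x j = x j \<otimes>\<^bsub>G\<^esub> x i"
      proof clarify
        fix i j assume ij: "(i,j) \<in> R"
        then have "i \<in> I" "j \<in> I" using R by auto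
        then have "x i \<in> q i" "x j \<in> q j" using x by auto
        then show "x i \<otimes>\<^bsub>G\<^esub> x j = x j \<otimes>\<^bsub>G\<^esub> x i" using qr ij unfolding commQ_def by blast
      qed
      ultimately show "x \<in> CS G I R" unfolding CS_def by blast
    qed
  qed
  have finR: "finite (rcosets\<^bsub>G\<^esub> ?Z)"
    using fin unfolding RCOSETS_def by simp
  have finT: "finite (TQ G I R)"
    by (rule finite_subset[of _ "I \<rightarrow>\<^sub>E rcosets\<^bsub>G\<^esub> ?Z"]) (auto simp: TQ_def intro: finite_PiE I finR)
  have finP: "finite (PiE I q)" if "q \<in> TQ G I R" for q
  proof -
    have "q i \<subseteq> carrier G" if "i \<in> I" for i using \<open>q \<in> TQ G I R\<close> that cosub unfolding TQ_def by auto
    then show ?thesis using I fin by (intro finite_PiE) (auto intro: finite_subset)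
  qed
  have disj: "PiE I q \<inter> PiE I q' = {}" if "q \<in> TQ G I R" "q' \<in> TQ G I R" "q \<noteq> q'" for q q'
  proof (rule ccontr)
    assume "PiE I q \<inter> PiE I q' \<noteq> {}"
    then obtain x where x: "x \<in> PiE I q" "x \<in> PiE I q'" by blast
    have qe: "q \<in> I \<rightarrow>\<^sub>E rcosets\<^bsub>G\<^esub> ?Z" "q' \<in> I \<rightarrow>\<^sub>E rcosets\<^bsub>G\<^esub> ?Z"
      using that unfolding TQ_def by auto
    have "q i = q' i" for i
    proof (cases "i \<in> I")
      case True
      then have "x i \<in> q i" "x i \<in> q' i" "q i \<in> rcosets\<^bsub>G\<^esub> ?Z" "q' i \<in> rcosets\<^bsub>G\<^esub> ?Z"
        using x qe by auto
      then show ?thesis using G.rcos_disjoint[OF S] unfolding pairwise_def disjnt_def by blast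
    next
      case False then show ?thesis using qe by (auto simp: PiE_def extensional_def)
    qed
    then show False using \<open>q \<noteq> q'\<close> by auto
  qed
  have cardP: "card (PiE I q) = card ?Z ^ card I" if "q \<in> TQ G I R" for q
  proof -
    have "card (q i) = card ?Z" if "i \<in> I" for i
    proof -
      have "q i \<in> rcosets\<^bsub>G\<^esub> ?Z" using \<open>q \<in> TQ G I R\<close> that unfolding TQ_def by auto
      then show ?thesis using G.card_rcosets_equal[of "q i" ?Z] Zc by simp
    qed
    then show ?thesis using I by (simp add: card_PiE)
  qed
  have "card (CS G I R) = (\<Sum>q\<in>TQ G I R. card (PiE I q))"
    unfolding eq using finT finP disj by (intro card_UN_disjoint) auto
  also have "\<dots> = card (TQ G I R) * card ?Z ^ card I" using cardP by simp
  finally show ?thesis .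
qed


lemma card_TQ_iso:
  assumes G: "group G" and H: "group H" and iso: "isoclinic G H"
    and R: "R \<subseteq> I \<times> I"
  shows "card (TQ G I R) = card (TQ H I R) \<and> card (rcosets\<^bsub>G\<^esub> (grp_center G)) = card (rcosets\<^bsub>H\<^esub> (grp_center H))"
proof -
  interpret G: group G by fact
  interpret H: group H by fact
  obtain \<theta> \<phi> where th: "\<theta> \<in> iso (G Mod grp_center G) (H Mod grp_center H)"
    and ph: "\<phi> \<in> iso (G\<lparr>carrier := derived G (carrier G)\<rparr>) (H\<lparr>carrier := derived H (carrier H)\<rparr>)"
    and rel: "\<forall>g1 \<in> carrier G. \<forall>g2 \<in> carrier G. \<forall>h1 \<in> carrier H. \<forall>h2 \<in> carrier H.
           \<theta> (grp_center G #>\<^bsub>G\<^esub> g1) = grp_center H #>\<^bsub>H\<^esub> h1 \<and>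
           \<theta> (grp_center G #>\<^bsub>G\<^esub> g2) = grp_center H #>\<^bsub>H\<^esub> h2 \<longrightarrow>
           \<phi> (commutator G g1 g2) = commutator H h1 h2"
    using iso unfolding isoclinic_def by blast
  let ?QG = "rcosets\<^bsub>G\<^esub> (grp_center G)"
  let ?QH = "rcosets\<^bsub>H\<^esub> (grp_center H)"
  have bij: "bij_betw \<theta> ?QG ?QH" using th unfolding iso_def by (simp add: FactGroup_def)
  have key: "commQ G q q' \<longleftrightarrow> commQ H (\<theta> q) (\<theta> q')" if q: "q \<in> ?QG" and q': "q' \<in> ?QG" for q q'
  proof -
    obtain g where g: "g \<in> carrier G" "q = grp_center G #>\<^bsub>G\<^esub> g" using q unfolding RCOSETS_def by auto
    obtain g' where g': "g' \<in> carrier G" "q' = grp_center G #>\<^bsub>G\<^esub> g'" using q' unfolding RCOSETS_def by auto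
    have "\<theta> q \<in> ?QH" "\<theta> q' \<in> ?QH" using bij q q' by (auto simp: bij_betw_def)
    then obtain h h' where h: "h \<in> carrier H" "\<theta> q = grp_center H #>\<^bsub>H\<^esub> h"
      and h': "h' \<in> carrier H" "\<theta> q' = grp_center H #>\<^bsub>H\<^esub> h'" unfolding RCOSETS_def by auto
    have "commQ G q q' \<longleftrightarrow> g \<otimes>\<^bsub>G\<^esub> g' = g' \<otimes>\<^bsub>G\<^esub> g"
      unfolding commQ_def g(2) g'(2) by (rule commQ_iff[OF G g(1) g'(1)])
    also have "\<dots> \<longleftrightarrow> h \<otimes>\<^bsub>H\<^esub> h' = h' \<otimes>\<^bsub>H\<^esub> h"
      by (rule isoclinic_comm_iff[OF G H th ph rel g(1) g'(1) h(1) h'(1)]) (use g g' h h' in auto)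
    also have "\<dots> \<longleftrightarrow> commQ H (\<theta> q) (\<theta> q')"
      unfolding commQ_def h(2) h'(2) by (rule commQ_iff[OF H h(1) h'(1), symmetric])
    finally show ?thesis .
  qed
  define Th where "Th = (\<lambda>q. \<lambda>i\<in>I. \<theta> (q i))"
  have inj: "inj_on Th (TQ G I R)"
  proof (rule inj_onI)
    fix q q' assume q: "q \<in> TQ G I R" and q': "q' \<in> TQ G I R" and e: "Th q = Th q'"
    have qe: "q \<in> I \<rightarrow>\<^sub>E ?QG" "q' \<in> I \<rightarrow>\<^sub>E ?QG" using q q' unfolding TQ_def by auto
    show "q = q'"
    proof
      fix i show "q i = q' i"
      proof (cases "i \<in> I")
        case True
        then have "\<theta> (q i) = \<theta> (q' i)" using fun_cong[OF e, of i] unfolding Th_def by simp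
        moreover have "q i \<in> ?QG" "q' i \<in> ?QG" using qe True by auto
        ultimately show ?thesis using bij unfolding bij_betw_def inj_on_def by blast
      next
        case False then show ?thesis using qe by (auto simp: PiE_def extensional_def)
      qed
    qed
  qed
  have img: "Th ` TQ G I R = TQ H I R"
  proof
    show "Th ` TQ G I R \<subseteq> TQ H I R"
    proof clarify
      fix q assume q: "q \<in> TQ G I R"
      have qe: "q \<in> I \<rightarrow>\<^sub>E ?QG" and qr: "\<forall>(i,j)\<in>R. commQ G (q i) (q j)" using q unfolding TQ_def by auto
      have "Th q \<in> I \<rightarrow>\<^sub>E ?QH" using qe bij unfolding Th_def by (auto simp: bij_betw_def)
      moreover have "\<forall>(i,j)\<in>R. commQ H (Th q i) (Th q j)"
      proof clarify
        fix i j assume ij: "(i,j) \<in> R"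
        show "commQ H (Th q i) (Th q j)"
        proof (cases "i \<in> I \<and> j \<in> I")
          case True
          then show ?thesis using key[of "q i" "q j"] qe qr ij unfolding Th_def by auto
        next
          case False
          then show ?thesis using R ij by auto
        qed
      qed
      ultimately show "Th q \<in> TQ H I R" unfolding TQ_def by blast
    qed
  next
    show "TQ H I R \<subseteq> Th ` TQ G I R"
    proof
      fix p assume p: "p \<in> TQ H I R"
      have pe: "p \<in> I \<rightarrow>\<^sub>E ?QH" and pr: "\<forall>(i,j)\<in>R. commQ H (p i) (p j)" using p unfolding TQ_def by auto
      define q where "q = (\<lambda>i\<in>I. inv_into ?QG \<theta> (p i))"
      have qi: "q i \<in> ?QG" "\<theta> (q i) = p i" if "i \<in> I" for i
      proof -
        have pi: "p i \<in> \<theta> ` ?QG" using that pe bij unfolding bij_betw_def by auto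
        show "q i \<in> ?QG" using that inv_into_into[OF pi] unfolding q_def by simp
        show "\<theta> (q i) = p i" using that f_inv_into_f[OF pi] unfolding q_def by simp
      qed
      have "Th q = p"
      proof
        fix i show "Th q i = p i"
          using qi pe unfolding Th_def by (cases "i \<in> I") (auto simp: PiE_def extensional_def)
      qed
      moreover have "q \<in> TQ G I R"
        unfolding TQ_def
      proof (intro CollectI conjI)
        show "q \<in> I \<rightarrow>\<^sub>E ?QG" using qi unfolding q_def by auto
        show "\<forall>(i,j)\<in>R. commQ G (q i) (q j)"
        proof clarify
          fix i j assume ij: "(i,j) \<in> R"
          show "commQ G (q i) (q j)"
          proof (cases "i \<in> I \<and> j \<in> I")
            case True
            then show ?thesis using key[of "q i" "q j"] qi pr ij by auto
          next
            case False
            then show ?thesis using R ij by auto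
          qed
        qed
      qed
      ultimately show "p \<in> Th ` TQ G I R" by blast
    qed
  qed
  have "card (TQ G I R) = card (TQ H I R)" using card_image[OF inj] img by simp
  moreover have "card ?QG = card ?QH" using bij_betw_same_card[OF bij] .
  ultimately show ?thesis by simp
qed


lemma card_CS_iso:
  assumes G: "group G" and fG: "finite (carrier G)" and H: "group H" and fH: "finite (carrier H)"
    and iso: "isoclinic G H" and I: "finite I" and R: "R \<subseteq> I \<times> I"
  shows "card (CS G I R) * order H ^ card I = card (CS H I R) * order G ^ card I"
proof -
  interpret G: group G by fact
  interpret H: group H by fact
  have oG: "order G = card (rcosets\<^bsub>G\<^esub> (grp_center G)) * card (grp_center G)"
    using G.lagrange[OF center_subgroup[OF G]] by simp
  have oH: "order H = card (rcosets\<^bsub>H\<^esub> (grp_center H)) * card (grp_center H)"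
    using H.lagrange[OF center_subgroup[OF H]] by simp
  have t: "card (TQ G I R) = card (TQ H I R)" and q: "card (rcosets\<^bsub>G\<^esub> (grp_center G)) = card (rcosets\<^bsub>H\<^esub> (grp_center H))"
    using card_TQ_iso[OF G H iso R] by auto
  show ?thesis
    unfolding card_CS[OF G fG I R] card_CS[OF H fH I R] oG oH t q
    by (simp add: power_mult_distrib ac_simps)
qed

lemma conj_tuple_mult:
  assumes G: "group G" "g \<in> carrier G" "h \<in> carrier G" "x \<in> tuples G n"
  shows "conj_tuple G n (g \<otimes>\<^bsub>G\<^esub> h) x = conj_tuple G n g (conj_tuple G n h x)"
proof -
  interpret G: group G by fact
  show ?thesis
    unfolding conj_tuple_def using assms(2-4)
    by (auto simp: tuples_def PiE_def Pi_def G.inv_mult_group G.m_assoc)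
qed

lemma conj_tuple_one:
  assumes G: "group G" "x \<in> tuples G n"
  shows "conj_tuple G n \<one>\<^bsub>G\<^esub> x = x"
proof -
  interpret G: group G by fact
  show ?thesis
    unfolding conj_tuple_def using assms(2)
    by (auto simp: tuples_def PiE_def Pi_def extensional_def)
qed

lemma conj_tuple_closed:
  assumes G: "group G" "g \<in> carrier G" "x \<in> tuples G n"
  shows "conj_tuple G n g x \<in> tuples G n"
proof -
  interpret G: group G by fact
  show ?thesis
    unfolding conj_tuple_def using assms(2,3)
    by (auto simp: tuples_def PiE_def Pi_def extensional_def)
qed

lemma conj_action:
  assumes G: "group G" and Y: "Y \<subseteq> tuples G n"
    and st: "\<And>g x. g \<in> carrier G \<Longrightarrow> x \<in> Y \<Longrightarrow> conj_tuple G n g x \<in> Y"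
  shows "group_action G Y (\<lambda>g. \<lambda>x\<in>Y. conj_tuple G n g x)"
proof -
  interpret G: group G by fact
  let ?f = "\<lambda>g. \<lambda>x\<in>Y. conj_tuple G n g x"
  have bij: "?f g \<in> Bij Y" if g: "g \<in> carrier G" for g
  proof -
    have "inj_on (?f g) Y"
    proof (rule inj_onI)
      fix x y assume x: "x \<in> Y" and y: "y \<in> Y" and e: "?f g x = ?f g y"
      then have "conj_tuple G n (inv\<^bsub>G\<^esub> g) (conj_tuple G n g x) = conj_tuple G n (inv\<^bsub>G\<^esub> g) (conj_tuple G n g y)"
        by simp
      then show "x = y"
        using x y Y g conj_tuple_mult[OF G, of "inv\<^bsub>G\<^esub> g" g] conj_tuple_one[OF G]
        by (auto simp: subset_iff)
    qed
    moreover have "?f g ` Y = Y"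
    proof
      show "?f g ` Y \<subseteq> Y" using st g by auto
      show "Y \<subseteq> ?f g ` Y"
      proof
        fix x assume x: "x \<in> Y"
        have "conj_tuple G n (inv\<^bsub>G\<^esub> g) x \<in> Y" using st g x by simp
        moreover have "x = conj_tuple G n g (conj_tuple G n (inv\<^bsub>G\<^esub> g) x)"
          using x Y g conj_tuple_mult[OF G, of g "inv\<^bsub>G\<^esub> g"] conj_tuple_one[OF G]
          by (auto simp: subset_iff)
        ultimately show "x \<in> ?f g ` Y" by (auto intro!: image_eqI[of _ _ "conj_tuple G n (inv\<^bsub>G\<^esub> g) x"])
      qed
    qed
    ultimately show ?thesis unfolding Bij_def bij_betw_def by auto
  qed
  have hom: "?f \<in> hom G (BijGroup Y)"
  proof (rule homI)
    fix g assume "g \<in> carrier G" then show "?f g \<in> carrier (BijGroup Y)"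
      using bij by (simp add: BijGroup_def)
  next
    fix g h assume g: "g \<in> carrier G" and h: "h \<in> carrier G"
    show "?f (g \<otimes>\<^bsub>G\<^esub> h) = ?f g \<otimes>\<^bsub>BijGroup Y\<^esub> ?f h"
      using bij[OF g] bij[OF h] g h st Y conj_tuple_mult[OF G g h]
      by (auto simp: BijGroup_def compose_def subset_iff fun_eq_iff)
  qed
  show ?thesis
    unfolding group_action_def group_hom_def group_hom_axioms_def
    using hom G group_BijGroup by simp
qed

lemma burnside_CS:
  assumes G: "group G" and fin: "finite (carrier G)" and Y: "Y \<subseteq> tuples G n"
    and st: "\<And>g x. g \<in> carrier G \<Longrightarrow> x \<in> Y \<Longrightarrow> conj_tuple G n g x \<in> Y"
    and hX: "\<And>g x. g \<in> carrier G \<Longrightarrow> x \<in> tuples G n \<Longrightarrow>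
        (x \<in> Y \<and> conj_tuple G n g x = x) \<longleftrightarrow> x(n := g) \<in> CS G {0..<Suc n} R"
  shows "card (conj_orbits G n Y) * order G = card (CS G {0..<Suc n} R)"
proof -
  interpret A: group_action G Y "\<lambda>g. \<lambda>x\<in>Y. conj_tuple G n g x"
    by (rule conj_action[OF G Y st])
  have finT: "finite (tuples G n)" unfolding tuples_def using fin by (intro finite_PiE) auto
  have finX: "finite Y" using finite_subset[OF Y finT] .
  have orb: "orbits G Y (\<lambda>g. \<lambda>x\<in>Y. conj_tuple G n g x) = conj_orbits G n Y"
    unfolding orbits_def orbit_def conj_orbits_def by auto
  have "card (conj_orbits G n Y) * order G = (\<Sum>g\<in>carrier G. card (invariants Y (\<lambda>g. \<lambda>x\<in>Y. conj_tuple G n g x) g))"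
    using A.burnside[OF fin finX] orb by simp
  also have "\<dots> = card (SIGMA g:carrier G. invariants Y (\<lambda>g. \<lambda>x\<in>Y. conj_tuple G n g x) g)"
    using fin finX by (subst card_SigmaI) (auto simp: invariants_def)
  also have "\<dots> = card (CS G {0..<Suc n} R)"
  proof (rule bij_betw_same_card)
    let ?P = "SIGMA g:carrier G. invariants Y (\<lambda>g. \<lambda>x\<in>Y. conj_tuple G n g x) g"
    show "bij_betw (\<lambda>(g,x). x(n := g)) ?P (CS G {0..<Suc n} R)"
    proof (rule bij_betw_imageI)
      show "inj_on (\<lambda>(g,x). x(n := g)) ?P"
      proof (rule inj_onI)
        fix p p' assume a0: "p \<in> ?P" "p' \<in> ?P" and e0: "(\<lambda>(g,x). x(n := g)) p = (\<lambda>(g,x). x(n := g)) p'"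
        obtain g x where p: "p = (g, x)" by (cases p)
        obtain g' x' where p': "p' = (g', x')" by (cases p')
        have a: "(g, x) \<in> ?P" "(g', x') \<in> ?P" using a0 p p' by auto
        have e: "x(n := g) = x'(n := g')" using e0 p p' by simp
        have "x \<in> tuples G n" "x' \<in> tuples G n" using a Y by (auto simp: invariants_def)
        then have "x n = undefined" "x' n = undefined" by (auto simp: tuples_def PiE_def extensional_def)
        moreover have "g = g'" using fun_cong[OF e, of n] by simp
        moreover have "x i = x' i" if "i \<noteq> n" for i using fun_cong[OF e, of i] that by simp
        ultimately show "p = p'" unfolding p p' by (metis ext)
      qed
      show "(\<lambda>(g,x). x(n := g)) ` ?P = CS G {0..<Suc n} R"
      proof
        show "(\<lambda>(g,x). x(n := g)) ` ?P \<subseteq> CS G {0..<Suc n} R"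
        proof
          fix y assume "y \<in> (\<lambda>(g,x). x(n := g)) ` ?P"
          then obtain g x where a: "(g, x) \<in> ?P" and yd: "y = x(n := g)" by auto
          then have "g \<in> carrier G" "x \<in> Y" "conj_tuple G n g x = x" by (auto simp: invariants_def)
          then show "y \<in> CS G {0..<Suc n} R" unfolding yd using hX Y by auto
        qed
        show "CS G {0..<Suc n} R \<subseteq> (\<lambda>(g,x). x(n := g)) ` ?P"
        proof
          fix y assume y: "y \<in> CS G {0..<Suc n} R"
          then have ye: "y \<in> {0..<Suc n} \<rightarrow>\<^sub>E carrier G" unfolding CS_def by auto
          define x where "x = y(n := undefined)"
          have gx: "y n \<in> carrier G" using ye by auto
          have xt: "x \<in> tuples G n" using ye unfolding x_def tuples_def by (auto simp: PiE_def Pi_def extensional_def)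
          have yx: "y = x(n := y n)" unfolding x_def by simp
          have "x \<in> Y \<and> conj_tuple G n (y n) x = x" using hX[OF gx xt] y yx by simp
          then have "(y n, x) \<in> ?P" using gx by (auto simp: invariants_def)
          then show "y \<in> (\<lambda>(g,x). x(n := g)) ` ?P" using yx by (auto intro!: image_eqI[of _ _ "(y n, x)"])
        qed
      qed
    qed
  qed
  finally show ?thesis .
qed


lemma conj_fix_iff:
  assumes G: "group G" and g: "g \<in> carrier G" and a: "a \<in> carrier G"
  shows "g \<otimes>\<^bsub>G\<^esub> a \<otimes>\<^bsub>G\<^esub> inv\<^bsub>G\<^esub> g = a \<longleftrightarrow> g \<otimes>\<^bsub>G\<^esub> a = a \<otimes>\<^bsub>G\<^esub> g"
proof
  interpret G: group G by fact
  assume "g \<otimes>\<^bsub>G\<^esub> a \<otimes>\<^bsub>G\<^esub> inv\<^bsub>G\<^esub> g = a"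
  then have "g \<otimes>\<^bsub>G\<^esub> a \<otimes>\<^bsub>G\<^esub> inv\<^bsub>G\<^esub> g \<otimes>\<^bsub>G\<^esub> g = a \<otimes>\<^bsub>G\<^esub> g" by simp
  then show "g \<otimes>\<^bsub>G\<^esub> a = a \<otimes>\<^bsub>G\<^esub> g" using g a by (simp add: G.m_assoc)
next
  interpret G: group G by fact
  assume e: "g \<otimes>\<^bsub>G\<^esub> a = a \<otimes>\<^bsub>G\<^esub> g"
  have "g \<otimes>\<^bsub>G\<^esub> a \<otimes>\<^bsub>G\<^esub> inv\<^bsub>G\<^esub> g = a \<otimes>\<^bsub>G\<^esub> g \<otimes>\<^bsub>G\<^esub> inv\<^bsub>G\<^esub> g" using e by simp
  also have "\<dots> = a" using g a by (simp add: G.m_assoc)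
  finally show "g \<otimes>\<^bsub>G\<^esub> a \<otimes>\<^bsub>G\<^esub> inv\<^bsub>G\<^esub> g = a" .
qed

lemma conj_tuple_fix:
  assumes G: "group G" and g: "g \<in> carrier G" and x: "x \<in> tuples G n"
  shows "conj_tuple G n g x = x \<longleftrightarrow> (\<forall>i<n. g \<otimes>\<^bsub>G\<^esub> x i = x i \<otimes>\<^bsub>G\<^esub> g)"
proof -
  have xc: "x i \<in> carrier G" if "i < n" for i using x that unfolding tuples_def by auto
  have xu: "x i = undefined" if "\<not> i < n" for i using x that unfolding tuples_def by (auto simp: PiE_def extensional_def)
  have "conj_tuple G n g x = x \<longleftrightarrow> (\<forall>i<n. g \<otimes>\<^bsub>G\<^esub> x i \<otimes>\<^bsub>G\<^esub> inv\<^bsub>G\<^esub> g = x i)"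
    unfolding conj_tuple_def fun_eq_iff using xu by auto
  also have "\<dots> \<longleftrightarrow> (\<forall>i<n. g \<otimes>\<^bsub>G\<^esub> x i = x i \<otimes>\<^bsub>G\<^esub> g)"
    using conj_fix_iff[OF G g] xc by auto
  finally show ?thesis .
qed

lemma upd_PiE:
  assumes x: "x \<in> tuples G n" and g: "g \<in> carrier G"
  shows "x(n := g) \<in> {0..<Suc n} \<rightarrow>\<^sub>E carrier G"
  using x g unfolding tuples_def by (auto simp: PiE_def Pi_def extensional_def)

definition Ra :: "nat \<Rightarrow> (nat \<times> nat) set" where
  "Ra n = {(n, i) | i. i < n}"

definition Rb :: "nat \<Rightarrow> (nat \<times> nat) set" where
  "Rb n = {0..<Suc n} \<times> {0..<Suc n}"

lemma alpha_CS:
  assumes G: "group G" and fin: "finite (carrier G)"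
  shows "alpha G n * order G = card (CS G {0..<Suc n} (Ra n))"
  unfolding alpha_def
proof (rule burnside_CS[OF G fin])
  show "tuples G n \<subseteq> tuples G n" by simp
  show "\<And>g x. g \<in> carrier G \<Longrightarrow> x \<in> tuples G n \<Longrightarrow> conj_tuple G n g x \<in> tuples G n"
    by (rule conj_tuple_closed[OF G])
  fix g x assume g: "g \<in> carrier G" and x: "x \<in> tuples G n"
  have "x(n := g) \<in> CS G {0..<Suc n} (Ra n) \<longleftrightarrow> (\<forall>i<n. g \<otimes>\<^bsub>G\<^esub> x i = x i \<otimes>\<^bsub>G\<^esub> g)"
    using upd_PiE[OF x g] unfolding CS_def Ra_def by auto
  then show "(x \<in> tuples G n \<and> conj_tuple G n g x = x) \<longleftrightarrow> x(n := g) \<in> CS G {0..<Suc n} (Ra n)"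
    using conj_tuple_fix[OF G g x] x by simp
qed

lemma conj_mult:
  assumes G: "group G" and g: "g \<in> carrier G" and a: "a \<in> carrier G" and b: "b \<in> carrier G"
  shows "(g \<otimes>\<^bsub>G\<^esub> a \<otimes>\<^bsub>G\<^esub> inv\<^bsub>G\<^esub> g) \<otimes>\<^bsub>G\<^esub> (g \<otimes>\<^bsub>G\<^esub> b \<otimes>\<^bsub>G\<^esub> inv\<^bsub>G\<^esub> g) = g \<otimes>\<^bsub>G\<^esub> (a \<otimes>\<^bsub>G\<^esub> b) \<otimes>\<^bsub>G\<^esub> inv\<^bsub>G\<^esub> g"
proof -
  interpret G: group G by fact
  have h: "inv\<^bsub>G\<^esub> g \<otimes>\<^bsub>G\<^esub> (g \<otimes>\<^bsub>G\<^esub> y) = y" if y: "y \<in> carrier G" for y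
    using y g by (simp add: G.m_assoc[symmetric])
  have "(g \<otimes>\<^bsub>G\<^esub> a \<otimes>\<^bsub>G\<^esub> inv\<^bsub>G\<^esub> g) \<otimes>\<^bsub>G\<^esub> (g \<otimes>\<^bsub>G\<^esub> b \<otimes>\<^bsub>G\<^esub> inv\<^bsub>G\<^esub> g)
      = g \<otimes>\<^bsub>G\<^esub> (a \<otimes>\<^bsub>G\<^esub> (inv\<^bsub>G\<^esub> g \<otimes>\<^bsub>G\<^esub> (g \<otimes>\<^bsub>G\<^esub> (b \<otimes>\<^bsub>G\<^esub> inv\<^bsub>G\<^esub> g))))"
    using a b g by (simp only: G.m_assoc G.m_closed G.inv_closed)
  also have "\<dots> = g \<otimes>\<^bsub>G\<^esub> (a \<otimes>\<^bsub>G\<^esub> (b \<otimes>\<^bsub>G\<^esub> inv\<^bsub>G\<^esub> g))"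
    using h[of "b \<otimes>\<^bsub>G\<^esub> inv\<^bsub>G\<^esub> g"] b g by simp
  also have "\<dots> = g \<otimes>\<^bsub>G\<^esub> (a \<otimes>\<^bsub>G\<^esub> b) \<otimes>\<^bsub>G\<^esub> inv\<^bsub>G\<^esub> g"
    using a b g by (simp only: G.m_assoc G.m_closed G.inv_closed)
  finally show ?thesis .
qed

lemma ball_Rb: "(\<forall>(i,j)\<in>Rb n. P i j) \<longleftrightarrow> (\<forall>i<Suc n. \<forall>j<Suc n. P i j)"
  unfolding Rb_def by auto

lemma beta_CS:
  assumes G: "group G" and fin: "finite (carrier G)"
  shows "beta G n * order G = card (CS G {0..<Suc n} (Rb n))"
  unfolding beta_def
proof (rule burnside_CS[OF G fin])
  interpret G: group G by fact
  show "commuting_tuples G n \<subseteq> tuples G n" unfolding commuting_tuples_def by auto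
  show "conj_tuple G n g x \<in> commuting_tuples G n" if g: "g \<in> carrier G" and x: "x \<in> commuting_tuples G n" for g x
  proof -
    have xt: "x \<in> tuples G n" and xc: "\<forall>i<n. \<forall>j<n. x i \<otimes>\<^bsub>G\<^esub> x j = x j \<otimes>\<^bsub>G\<^esub> x i"
      using x unfolding commuting_tuples_def by auto
    have xcar: "x i \<in> carrier G" if "i < n" for i using xt that unfolding tuples_def by auto
    have "conj_tuple G n g x i \<otimes>\<^bsub>G\<^esub> conj_tuple G n g x j = conj_tuple G n g x j \<otimes>\<^bsub>G\<^esub> conj_tuple G n g x i"
      if ij: "i < n" "j < n" for i j
    proof -
      have m: "(g \<otimes>\<^bsub>G\<^esub> a \<otimes>\<^bsub>G\<^esub> inv\<^bsub>G\<^esub> g) \<otimes>\<^bsub>G\<^esub> (g \<otimes>\<^bsub>G\<^esub> b \<otimes>\<^bsub>G\<^esub> inv\<^bsub>G\<^esub> g) = g \<otimes>\<^bsub>G\<^esub> (a \<otimes>\<^bsub>G\<^esub> b) \<otimes>\<^bsub>G\<^esub> inv\<^bsub>G\<^esub> g"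
        if "a \<in> carrier G" "b \<in> carrier G" for a b
        using conj_mult[OF G g that] .
      have e: "x i \<otimes>\<^bsub>G\<^esub> x j = x j \<otimes>\<^bsub>G\<^esub> x i" using xc ij by blast
      have ci: "conj_tuple G n g x i = g \<otimes>\<^bsub>G\<^esub> x i \<otimes>\<^bsub>G\<^esub> inv\<^bsub>G\<^esub> g" using ij unfolding conj_tuple_def by simp
      have cj: "conj_tuple G n g x j = g \<otimes>\<^bsub>G\<^esub> x j \<otimes>\<^bsub>G\<^esub> inv\<^bsub>G\<^esub> g" using ij unfolding conj_tuple_def by simp
      show ?thesis unfolding ci cj m[OF xcar[OF ij(1)] xcar[OF ij(2)]] m[OF xcar[OF ij(2)] xcar[OF ij(1)]]
        by (simp only: e)
    qed
    then show ?thesis using conj_tuple_closed[OF G g xt] unfolding commuting_tuples_def by blast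
  qed
  fix g x assume g: "g \<in> carrier G" and x: "x \<in> tuples G n"
  let ?y = "x(n := g)"
  have "?y \<in> CS G {0..<Suc n} (Rb n) \<longleftrightarrow> (\<forall>i<Suc n. \<forall>j<Suc n. ?y i \<otimes>\<^bsub>G\<^esub> ?y j = ?y j \<otimes>\<^bsub>G\<^esub> ?y i)"
  proof -
    have "?y \<in> CS G {0..<Suc n} (Rb n) \<longleftrightarrow> (\<forall>(i,j)\<in>Rb n. ?y i \<otimes>\<^bsub>G\<^esub> ?y j = ?y j \<otimes>\<^bsub>G\<^esub> ?y i)"
      using upd_PiE[OF x g] unfolding CS_def by blast
    then show ?thesis using ball_Rb[of n "\<lambda>i j. ?y i \<otimes>\<^bsub>G\<^esub> ?y j = ?y j \<otimes>\<^bsub>G\<^esub> ?y i"] by simp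
  qed
  also have "\<dots> \<longleftrightarrow> (\<forall>i<n. \<forall>j<n. x i \<otimes>\<^bsub>G\<^esub> x j = x j \<otimes>\<^bsub>G\<^esub> x i) \<and> (\<forall>i<n. g \<otimes>\<^bsub>G\<^esub> x i = x i \<otimes>\<^bsub>G\<^esub> g)"
  proof
    assume A: "\<forall>i<Suc n. \<forall>j<Suc n. ?y i \<otimes>\<^bsub>G\<^esub> ?y j = ?y j \<otimes>\<^bsub>G\<^esub> ?y i"
    have Ai: "\<And>i j. i < Suc n \<Longrightarrow> j < Suc n \<Longrightarrow> ?y i \<otimes>\<^bsub>G\<^esub> ?y j = ?y j \<otimes>\<^bsub>G\<^esub> ?y i" using A by blast
    have 1: "x i \<otimes>\<^bsub>G\<^esub> x j = x j \<otimes>\<^bsub>G\<^esub> x i" if "i < n" "j < n" for i j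
      using Ai[of i j] that by simp
    have 2: "g \<otimes>\<^bsub>G\<^esub> x i = x i \<otimes>\<^bsub>G\<^esub> g" if "i < n" for i
      using Ai[of n i] that by simp
    show "(\<forall>i<n. \<forall>j<n. x i \<otimes>\<^bsub>G\<^esub> x j = x j \<otimes>\<^bsub>G\<^esub> x i) \<and> (\<forall>i<n. g \<otimes>\<^bsub>G\<^esub> x i = x i \<otimes>\<^bsub>G\<^esub> g)"
      using 1 2 by blast
  next
    assume B: "(\<forall>i<n. \<forall>j<n. x i \<otimes>\<^bsub>G\<^esub> x j = x j \<otimes>\<^bsub>G\<^esub> x i) \<and> (\<forall>i<n. g \<otimes>\<^bsub>G\<^esub> x i = x i \<otimes>\<^bsub>G\<^esub> g)"
    show "\<forall>i<Suc n. \<forall>j<Suc n. ?y i \<otimes>\<^bsub>G\<^esub> ?y j = ?y j \<otimes>\<^bsub>G\<^esub> ?y i"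
    proof (intro allI impI)
      fix i j assume i: "i < Suc n" and j: "j < Suc n"
      show "?y i \<otimes>\<^bsub>G\<^esub> ?y j = ?y j \<otimes>\<^bsub>G\<^esub> ?y i"
      proof (cases "i = n")
        case True
        then show ?thesis
        proof (cases "j = n")
          case False then have "j < n" using j by simp
          then show ?thesis using B \<open>i = n\<close> False by simp
        qed simp
      next
        case False then have i': "i < n" using i by simp
        then show ?thesis
        proof (cases "j = n")
          case True then show ?thesis using B i' False by simp
        next
          case False then have "j < n" using j by simp
          then show ?thesis using B i' \<open>i \<noteq> n\<close> False by simp
        qed
      qed
    qed
  qed
  finally have calc: "?y \<in> CS G {0..<Suc n} (Rb n) \<longleftrightarrow> (\<forall>i<n. \<forall>j<n. x i \<otimes>\<^bsub>G\<^esub> x j = x j \<otimes>\<^bsub>G\<^esub> x i) \<and> (\<forall>i<n. g \<otimes>\<^bsub>G\<^esub> x i = x i \<otimes>\<^bsub>G\<^esub> g)" .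
  show "(x \<in> commuting_tuples G n \<and> conj_tuple G n g x = x) \<longleftrightarrow> ?y \<in> CS G {0..<Suc n} (Rb n)"
  proof -
    have "x \<in> commuting_tuples G n \<longleftrightarrow> (\<forall>i<n. \<forall>j<n. x i \<otimes>\<^bsub>G\<^esub> x j = x j \<otimes>\<^bsub>G\<^esub> x i)"
      using x unfolding commuting_tuples_def by blast
    then show ?thesis using conj_tuple_fix[OF G g x] calc by blast
  qed
qed


lemma order_pos:
  assumes G: "group G" and fin: "finite (carrier G)"
  shows "order G > 0"
proof -
  interpret G: group G by fact
  have "carrier G \<noteq> {}" by auto
  then show ?thesis using fin unfolding order_def by auto
qed

lemma ratio_lemma:
  fixes aG aH oG oH cG cH k :: nat
  assumes "aG * oG = cG" "aH * oH = cH" "cG * oH ^ Suc k = cH * oG ^ Suc k" "oG > 0" "oH > 0"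
  shows "aG * oH ^ k = aH * oG ^ k"
proof -
  have "(aG * oH ^ k) * (oG * oH) = (aG * oG) * oH ^ Suc k" by (simp add: ac_simps)
  also have "\<dots> = cH * oG ^ Suc k" using assms(1,3) by simp
  also have "\<dots> = (aH * oG ^ k) * (oG * oH)" using assms(2) by (simp add: ac_simps)
  finally have "(aG * oH ^ k) * (oG * oH) = (aH * oG ^ k) * (oG * oH)" .
  then show ?thesis using assms(4,5) by simp
qed

lemma subst_scaled_nth:
  "fps_nth (subst_scaled F m) k = fps_nth F k * (1 / of_nat m) ^ k"
proof -
  have "fps_nth (subst_scaled F m) k = (\<Sum>i = 0..k. fps_nth F i * fps_nth ((fps_const (1 / of_nat m) * fps_X) ^ i) k)"
    unfolding subst_scaled_def by (rule fps_compose_nth)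
  also have "\<dots> = (\<Sum>i = 0..k. if i = k then fps_nth F k * (1 / of_nat m) ^ k else 0)"
    by (rule sum.cong) (auto simp: power_mult_distrib fps_const_power)
  also have "\<dots> = fps_nth F k * (1 / of_nat m) ^ k" by simp
  finally show ?thesis .
qed

lemma scaled_eq:
  assumes pos: "oG > 0" "oH > 0"
    and e: "\<And>k. f k * oH ^ k = g k * oG ^ k"
  shows "subst_scaled (Abs_fps (\<lambda>n. of_nat (f n))) oG = subst_scaled (Abs_fps (\<lambda>n. of_nat (g n))) oH"
proof (rule fps_ext)
  fix k
  have e': "(of_nat (f k) :: rat) * of_nat oH ^ k = of_nat (g k) * of_nat oG ^ k"
    using arg_cong[OF e[of k], of "of_nat :: nat \<Rightarrow> rat"] by simp
  have "(of_nat (f k) :: rat) * (1 / of_nat oG) ^ k = of_nat (f k) / of_nat oG ^ k"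
    by (simp add: power_divide)
  also have "\<dots> = of_nat (g k) / of_nat oH ^ k"
    using e' pos by (simp add: frac_eq_eq)
  also have "\<dots> = of_nat (g k) * (1 / of_nat oH) ^ k"
    by (simp add: power_divide)
  finally show "fps_nth (subst_scaled (Abs_fps (\<lambda>n. of_nat (f n))) oG) k = fps_nth (subst_scaled (Abs_fps (\<lambda>n. of_nat (g n))) oH) k"
    unfolding subst_scaled_nth by simp
qed

theorem theorem4p8:
  fixes G :: "('a, 'b) monoid_scheme" and H :: "('c, 'd) monoid_scheme"
  assumes "group G" and "finite (carrier G)"
    and "group H" and "finite (carrier H)"
    and "isoclinic G H"
  shows "subst_scaled (A_fps G) (order G) = subst_scaled (A_fps H) (order H) \<and>
         subst_scaled (B_fps G) (order G) = subst_scaled (B_fps H) (order H)"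
proof -
  note G = assms(1) and fG = assms(2) and H = assms(3) and fH = assms(4) and iso = assms(5)
  have pG: "order G > 0" by (rule order_pos[OF G fG])
  have pH: "order H > 0" by (rule order_pos[OF H fH])
  have Ra_sub: "Ra n \<subseteq> {0..<Suc n} \<times> {0..<Suc n}" for n unfolding Ra_def by auto
  have Rb_sub: "Rb n \<subseteq> {0..<Suc n} \<times> {0..<Suc n}" for n unfolding Rb_def by auto
  have a: "alpha G k * order H ^ k = alpha H k * order G ^ k" for k
    using ratio_lemma[OF alpha_CS[OF G fG] alpha_CS[OF H fH] _ pG pH]
      card_CS_iso[OF G fG H fH iso _ Ra_sub[of k]] by simp
  have b: "beta G k * order H ^ k = beta H k * order G ^ k" for k
    using ratio_lemma[OF beta_CS[OF G fG] beta_CS[OF H fH] _ pG pH]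
      card_CS_iso[OF G fG H fH iso _ Rb_sub[of k]] by simp
  show ?thesis
    unfolding A_fps_def B_fps_def
    using scaled_eq[OF pG pH a] scaled_eq[OF pG pH b] by simp
qed

end
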